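(* Let $f:\mathbb{R}^n\times\mathbb{R}^p\times\mathbb{R}^q\to\mathbb{R}^n$ be continuously differentiable, let $N:\mathbb{R}^n\to\mathbb{R}^p$ be a neural network controller, and $f^{\mathsf c}(x,w)=f(x,N(x),w)$. Let $T\in\mathbb{R}^{n\times n}$ be invertible, $\Phi(x)=Tx$, and define the transformed system $\dot y=g^{\mathsf c}(y,w):=Tf(T^{-1}y,N'(y),w)$ with $N'(y):=N(T^{-1}y)$. Fix an interval $[\underline z,\overline z]\subseteq\mathbb{R}^n$ and $[\underline w,\overline w]\subseteq\mathbb{R}^q$. Let $(C,\underline d,\overline d)$ be a local affine bound of $N$ on $[\underline z,\overline z]$ and $[\underline u,\overline u]$ with $\underline u=C^+\underline z+C^-\overline z+\underline d$, $\overline u=C^-\underline z+C^+\overline z+\overline d$. Let $[\mathsf J_x]\in\mathbb{IR}^{n\times n}$, $[\mathsf J_u]\in\mathbb{IR}^{n\times p}$, $[\mathsf J_w]\in\mathbb{IR}^{n\times q}$ be interval matrices such that $D_xf(x,u,w)\in[\mathsf J_x]$, $D_uf(x,u,w)\in[\mathsf J_u]$, $D_wf(x,u,w)\in[\mathsf J_w]$ for all $(x,u,w)\in[\underline z,\overline z]\times[\underline u,\overline u]\times[\underline w,\overline w]$. Fix $\mathring x\in[\underline z,\overline z]$, $\mathring u=N(\mathring x)$, $\mathring w\in[\underline w,\overline w]$, and let $[\mathsf R]:=-[\mathsf J_x]\mathring x-[\mathsf J_u]\mathring u+[\mathsf J_w]([\underline w,\overline w]-\mathring w)+f(\mathring x,\mathring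 u,\mathring w)$ (interval arithmetic). For an interval $[\underline y,\overline y]$ let $(C',\underline d',\overline d')$ be a local affine bound of $N'$ on $[\underline y,\overline y]$, and define $$[\mathsf G^{\mathsf c}(\underline y,\overline y,\underline w,\overline w)]:=T\Big(\big([\mathsf J_x]+[\mathsf J_u](C'T)\big)\big(T^{-1}[\underline y,\overline y]\big)\Big)+T\big([\mathsf J_u][\underline d',\overline d']\big)+T[\mathsf R],$$ evaluated in interval arithmetic (real matrices/vectors treated as degenerate intervals). Then $\mathsf G^{\mathsf c}$ is a $\Phi([\underline z,\overline z])$-localized inclusion function for $g^{\mathsf c}$: for every interval $[\underline y,\overline y]\subseteq\Phi([\underline z,\overline z])=\{Tx:x\in[\underline z,\overline z]\}$, every $y\in[\underline y,\overline y]$ and every $w\in[\underline w,\overline w]$, $g^{\mathsf c}(y,w)\in[\mathsf G^{\mathsf c}(\underline y,\overline y,\underline w,\overline w)]$.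
   Context: Interval arithmetic: $\mathbb{IR}^{m}$ (resp. $\mathbb{IR}^{m\times k}$) denotes intervals (interval matrices) $[\underline A,\overline A]=\{A:\underline A\le A\le\overline A\}$ entrywise. Operations: $[\underline a,\overline a]+[\underline b,\overline b]=[\underline a+\underline b,\overline a+\overline b]$ (entrywise for vectors/matrices); $[\underline a,\overline a]\cdot[\underline b,\overline b]=[\min S,\max S]$ with $S=\{\underline a\underline b,\underline a\overline b,\overline a\underline b,\overline a\overline b\}$; $([A][B])_{ij}=\sum_k[A]_{ik}\cdot[B]_{kj}$. A real number $c$ is the interval $[c,c]$; subtracting a real vector shifts the interval. Neural network: $N(x)=W^{(k)}\xi^{(k)}+b^{(k)}$, $\xi^{(0)}=x$, $\xi^{(i)}=\phi^{(i-1)}(W^{(i-1)}\xi^{(i-1)}+b^{(i-1)})$, with diagonal activations satisfying $0\le(\phi_j(a)-\phi_j(b))/(a-b)\le1$. Local affine bound: for an interval $[\underline\xi,\overline\xi]$, a tuple $(C,\underline d,\overline d)$ with $Cx+\underline d\le N(x)\le Cx+\overline d$ for every $x\in[\underline\xi,\overline\xi]$ (such bounds are assumed available, e.g. from CROWN). For a matrix $C$, $C^+_{ij}=\max(C_{ij},0)$ and $C^-=C-C^+$. An $\mathcal S$-localized inclusion function $\mathsf G$ for $g^{\mathsf c}$ is one whose interval output contains $g^{\mathsf c}(y,w)$ for all $y\in[\underline y,\overline y]$, $w\in[\underline w,\overline w]$, whenever $[\underline y,\overline y]\subseteq\mathcal S$. *)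

theory Defs
  imports "HOL-Analysis.Analysis"
begin

text \<open>Intervals (of reals, real vectors, real matrices) are represented as pairs
  (lower, upper); membership is w.r.t. the componentwise order.\<close>

type_synonym 'a ivl = "'a \<times> 'a"

definition imem :: "'a::order \<Rightarrow> 'a ivl \<Rightarrow> bool" where
  "imem x A \<longleftrightarrow> fst A \<le> x \<and> x \<le> snd A"

definition pt :: "'a \<Rightarrow> 'a ivl" where
  "pt x = (x, x)"

definition iadd :: "'a::plus ivl \<Rightarrow> 'a ivl \<Rightarrow> 'a ivl" where
  "iadd A B = (fst A + fst B, snd A + snd B)"

definition ineg :: "'a::uminus ivl \<Rightarrow> 'a ivl" where
  "ineg A = (- snd A, - fst A)"

definition imul :: "real ivl \<Rightarrow> real ivl \<Rightarrow> real ivl" where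
  "imul A B =
     (let a1 = fst A; a2 = snd A; b1 = fst B; b2 = snd B in
      (min (min (a1*b1) (a1*b2)) (min (a2*b1) (a2*b2)),
       max (max (a1*b1) (a1*b2)) (max (a2*b1) (a2*b2))))"

definition imatmul :: "(real^'k^'m) ivl \<Rightarrow> (real^'l^'k) ivl \<Rightarrow> (real^'l^'m) ivl" where
  "imatmul A B =
     ((\<chi> i j. \<Sum>k\<in>UNIV. fst (imul (fst A $ i $ k, snd A $ i $ k) (fst B $ k $ j, snd B $ k $ j))),
      (\<chi> i j. \<Sum>k\<in>UNIV. snd (imul (fst A $ i $ k, snd A $ i $ k) (fst B $ k $ j, snd B $ k $ j))))"

definition imatvec :: "(real^'k^'m) ivl \<Rightarrow> (real^'k) ivl \<Rightarrow> (real^'m) ivl" where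
  "imatvec A v =
     ((\<chi> i. \<Sum>k\<in>UNIV. fst (imul (fst A $ i $ k, snd A $ i $ k) (fst v $ k, snd v $ k))),
      (\<chi> i. \<Sum>k\<in>UNIV. snd (imul (fst A $ i $ k, snd A $ i $ k) (fst v $ k, snd v $ k))))"

definition mpos :: "real^'k^'m \<Rightarrow> real^'k^'m" where
  "mpos C = (\<chi> i j. max (C $ i $ j) 0)"

definition mneg :: "real^'k^'m \<Rightarrow> real^'k^'m" where
  "mneg C = C - mpos C"

definition local_affine_bound ::
  "(real^'n \<Rightarrow> real^'p) \<Rightarrow> real^'n \<Rightarrow> real^'n \<Rightarrow> real^'n^'p \<Rightarrow> real^'p \<Rightarrow> real^'p \<Rightarrow> bool" where
  "local_affine_bound N lo hi C dl du \<longleftrightarrow>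
     (\<forall>x. lo \<le> x \<and> x \<le> hi \<longrightarrow> C *v x + dl \<le> N x \<and> N x \<le> C *v x + du)"

definition Dx :: "(((real^'n) \<times> (real^'p) \<times> (real^'q)) \<Rightarrow>\<^sub>L (real^'n)) \<Rightarrow> real^'n^'n" where
  "Dx L = matrix (\<lambda>h. blinfun_apply L (h, 0, 0))"

definition Du :: "(((real^'n) \<times> (real^'p) \<times> (real^'q)) \<Rightarrow>\<^sub>L (real^'n)) \<Rightarrow> real^'p^'n" where
  "Du L = matrix (\<lambda>h. blinfun_apply L (0, h, 0))"

definition Dw :: "(((real^'n) \<times> (real^'p) \<times> (real^'q)) \<Rightarrow>\<^sub>L (real^'n)) \<Rightarrow> real^'q^'n" where
  "Dw L = matrix (\<lambda>h. blinfun_apply L (0, 0, h))"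

end

theory Submission imports Defs begin

lemma lin_between:
  fixes a b b1 b2 :: real
  assumes "b1 \<le> b" "b \<le> b2"
  shows "min (a*b1) (a*b2) \<le> a*b \<and> a*b \<le> max (a*b1) (a*b2)"
proof (cases "a \<ge> 0")
  case True
  then have "a*b1 \<le> a*b" "a*b \<le> a*b2" using assms by (auto intro: mult_left_mono)
  then show ?thesis by linarith
next
  case False
  then have "a*b2 \<le> a*b" "a*b \<le> a*b1" using assms by (auto intro: mult_left_mono_neg)
  then show ?thesis by linarith
qed

lemma imul_incl:
  fixes a b a1 a2 b1 b2 :: real
  assumes "a1 \<le> a" "a \<le> a2" "b1 \<le> b" "b \<le> b2"
  shows "fst (imul (a1,a2) (b1,b2)) \<le> a*b \<and> a*b \<le> snd (imul (a1,a2) (b1,b2))"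
proof -
  have 1: "min (a*b1) (a*b2) \<le> a*b \<and> a*b \<le> max (a*b1) (a*b2)" using lin_between assms by blast
  have 2: "min (a1*b1) (a2*b1) \<le> a*b1 \<and> a*b1 \<le> max (a1*b1) (a2*b1)"
    using lin_between[of a1 a a2 b1] assms by (simp add: mult.commute)
  have 3: "min (a1*b2) (a2*b2) \<le> a*b2 \<and> a*b2 \<le> max (a1*b2) (a2*b2)"
    using lin_between[of a1 a a2 b2] assms by (simp add: mult.commute)
  show ?thesis using 1 2 3 unfolding imul_def Let_def
    by (simp add: min_le_iff_disj le_max_iff_disj) linarith
qed

lemma imem_vec: "imem (x::real^'n) A \<longleftrightarrow> (\<forall>i. fst A $ i \<le> x $ i \<and> x $ i \<le> snd A $ i)"
  by (auto simp: imem_def less_eq_vec_def)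

lemma imem_mat: "imem (x::real^'k^'n) A \<longleftrightarrow> (\<forall>i j. fst A $ i $ j \<le> x $ i $ j \<and> x $ i $ j \<le> snd A $ i $ j)"
  by (auto simp: imem_def less_eq_vec_def)

lemma imatvec_incl:
  assumes "imem (A::real^'k^'m) AI" "imem v VI"
  shows "imem (A *v v) (imatvec AI VI)"
  unfolding imem_vec imatvec_def matrix_vector_mult_def
proof (simp, intro allI conjI)
  fix i
  have h: "\<And>k. fst (imul (fst AI $ i $ k, snd AI $ i $ k) (fst VI $ k, snd VI $ k)) \<le> A$i$k * v$k
     \<and> A$i$k * v$k \<le> snd (imul (fst AI $ i $ k, snd AI $ i $ k) (fst VI $ k, snd VI $ k))"
    using assms by (intro imul_incl) (auto simp: imem_vec imem_mat)
  show "(\<Sum>k\<in>UNIV. fst (imul (fst AI $ i $ k, snd AI $ i $ k) (fst VI $ k, snd VI $ k))) \<le> (\<Sum>j\<in>UNIV. A $ i $ j * v $ j)"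
    using h by (intro sum_mono) auto
  show "(\<Sum>j\<in>UNIV. A $ i $ j * v $ j) \<le> (\<Sum>k\<in>UNIV. snd (imul (fst AI $ i $ k, snd AI $ i $ k) (fst VI $ k, snd VI $ k)))"
    using h by (intro sum_mono) auto
qed

lemma imatmul_incl:
  assumes "imem (A::real^'k^'m) AI" "imem (B::real^'l^'k) BI"
  shows "imem (A ** B) (imatmul AI BI)"
  unfolding imem_mat imatmul_def matrix_matrix_mult_def
proof (simp, intro allI conjI)
  fix i j
  have h: "\<And>k. fst (imul (fst AI $ i $ k, snd AI $ i $ k) (fst BI $ k $ j, snd BI $ k $ j)) \<le> A$i$k * B$k$j
     \<and> A$i$k * B$k$j \<le> snd (imul (fst AI $ i $ k, snd AI $ i $ k) (fst BI $ k $ j, snd BI $ k $ j))"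
    using assms by (intro imul_incl) (auto simp: imem_mat)
  show "(\<Sum>k\<in>UNIV. fst (imul (fst AI $ i $ k, snd AI $ i $ k) (fst BI $ k $ j, snd BI $ k $ j))) \<le> (\<Sum>k\<in>UNIV. A $ i $ k * B $ k $ j)"
    using h by (intro sum_mono) auto
  show "(\<Sum>k\<in>UNIV. A $ i $ k * B $ k $ j) \<le> (\<Sum>k\<in>UNIV. snd (imul (fst AI $ i $ k, snd AI $ i $ k) (fst BI $ k $ j, snd BI $ k $ j)))"
    using h by (intro sum_mono) auto
qed

lemma iadd_incl: "imem (x::'a::ordered_ab_group_add) A \<Longrightarrow> imem y B \<Longrightarrow> imem (x+y) (iadd A B)"
  by (auto simp: imem_def iadd_def add_mono)

lemma ineg_incl: "imem (x::'a::ordered_ab_group_add) A \<Longrightarrow> imem (-x) (ineg A)"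
  by (auto simp: imem_def ineg_def)

lemma pt_incl: "imem (x::'a::order) (pt x)"
  by (auto simp: imem_def pt_def)

lemma decomp:
  fixes L :: "((real^'n) \<times> (real^'p) \<times> (real^'q)) \<Rightarrow>\<^sub>L (real^'n)"
  shows "blinfun_apply L (h,k,l) = Dx L *v h + Du L *v k + Dw L *v l"
proof -
  have lx: "linear (\<lambda>h. blinfun_apply L (h, 0, 0))"
    by (rule linearI) (simp_all add: blinfun.add_right[symmetric] blinfun.scaleR_right[symmetric])
  have lu: "linear (\<lambda>h. blinfun_apply L (0, h, 0))"
    by (rule linearI) (simp_all add: blinfun.add_right[symmetric] blinfun.scaleR_right[symmetric])
  have lw: "linear (\<lambda>h. blinfun_apply L (0, 0, h))"
    by (rule linearI) (simp_all add: blinfun.add_right[symmetric] blinfun.scaleR_right[symmetric])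
  have "(h,k,l) = (h,0,0) + (0,k,0) + (0,0,l)" by simp
  then have "blinfun_apply L (h,k,l) = blinfun_apply L (h,0,0) + blinfun_apply L (0,k,0) + blinfun_apply L (0,0,l)"
    by (metis blinfun.add_right)
  also have "\<dots> = Dx L *v h + Du L *v k + Dw L *v l"
    unfolding Dx_def Du_def Dw_def
    using matrix_vector_mul(2)[OF lx] matrix_vector_mul(2)[OF lu] matrix_vector_mul(2)[OF lw]
    by (metis)
  finally show ?thesis .
qed

lemma mvt_comp:
  fixes f :: "'a::real_normed_vector \<Rightarrow> real^'n"
  assumes der: "\<And>z. (f has_derivative blinfun_apply (f' z)) (at z)"
  shows "\<exists>t\<in>{0..1}. f p $ i - f p0 $ i = blinfun_apply (f' (p0 + t *\<^sub>R (p - p0))) (p - p0) $ i"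
proof -
  define \<phi> where "\<phi> t = f (p0 + t *\<^sub>R (p - p0)) $ i" for t :: real
  have d: "(\<phi> has_derivative (\<lambda>h. blinfun_apply (f' (p0 + t *\<^sub>R (p - p0))) (h *\<^sub>R (p - p0)) $ i)) (at t within {0..1})" for t
  proof -
    have l: "((\<lambda>t. p0 + t *\<^sub>R (p - p0)) has_derivative (\<lambda>h. h *\<^sub>R (p - p0))) (at t within {0..1})"
      by (auto intro!: derivative_eq_intros)
    have "((\<lambda>t. f (p0 + t *\<^sub>R (p - p0))) has_derivative (\<lambda>h. blinfun_apply (f' (p0 + t *\<^sub>R (p - p0))) (h *\<^sub>R (p - p0)))) (at t within {0..1})"
      using has_derivative_compose[OF l der] by (simp add: o_def)
    from bounded_linear.has_derivative[OF bounded_linear_vec_nth[of i] this]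
    show ?thesis unfolding \<phi>_def .
  qed
  from mvt_very_simple[of 0 1 \<phi>, OF _ d] obtain t where "t \<in> {0..1}"
    "\<phi> 1 - \<phi> 0 = blinfun_apply (f' (p0 + t *\<^sub>R (p - p0))) (1 *\<^sub>R (p - p0)) $ i" by auto
  then show ?thesis unfolding \<phi>_def by auto
qed

lemma seg_box:
  fixes a b x0 x :: "real^'n"
  assumes "x0 \<in> {a..b}" "x \<in> {a..b}" "0 \<le> t" "t \<le> 1"
  shows "x0 + t *\<^sub>R (x - x0) \<in> {a..b}"
proof -
  have "a$i \<le> x0$i + t * (x$i - x0$i) \<and> x0$i + t * (x$i - x0$i) \<le> b$i" for i
  proof -
    have h: "a$i \<le> x0$i" "x0$i \<le> b$i" "a$i \<le> x$i" "x$i \<le> b$i" using assms by (auto simp: less_eq_vec_def)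
    have e: "x0$i + t * (x$i - x0$i) = (1-t) * x0$i + t * x$i" by algebra
    have "(1-t)*a$i \<le> (1-t)*x0$i" "t*a$i \<le> t*x$i" "(1-t)*x0$i \<le> (1-t)*b$i" "t*x$i \<le> t*b$i"
      using h assms by (auto intro: mult_left_mono)
    then show ?thesis unfolding e by (simp add: algebra_simps) 
  qed
  then show ?thesis by (auto simp: less_eq_vec_def)
qed

lemma affine_range:
  fixes C :: "real^'n^'p"
  assumes "x \<in> {lz..uz}"
  shows "C *v x \<in> {mpos C *v lz + mneg C *v uz .. mneg C *v lz + mpos C *v uz}"
proof -
  have h: "lz$j \<le> x$j" "x$j \<le> uz$j" for j using assms by (auto simp: less_eq_vec_def)
  have t: "max (C$i$j) 0 * lz$j + (C$i$j - max (C$i$j) 0) * uz$j \<le> C$i$j * x$j \<and>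
           C$i$j * x$j \<le> (C$i$j - max (C$i$j) 0) * lz$j + max (C$i$j) 0 * uz$j" for i j
  proof (cases "C$i$j \<ge> 0")
    case True then show ?thesis using h[of j] by (simp add: mult_left_mono)
  next
    case False then show ?thesis using h[of j] by (simp add: mult_left_mono_neg)
  qed
  show ?thesis
    by (auto simp: less_eq_vec_def matrix_vector_mult_def mpos_def mneg_def sum.distrib[symmetric]
        intro!: sum_mono t[THEN conjunct1] t[THEN conjunct2])
qed

theorem proposition2:
  fixes f :: "(real^'n) \<times> (real^'p) \<times> (real^'q) \<Rightarrow> real^'n"
    and f' :: "(real^'n) \<times> (real^'p) \<times> (real^'q) \<Rightarrow> (((real^'n) \<times> (real^'p) \<times> (real^'q)) \<Rightarrow>\<^sub>L (real^'n))"
    and N :: "real^'n \<Rightarrow> real^'p"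
    and T :: "real^'n^'n"
    and lz uz :: "real^'n" and lw uw :: "real^'q"
    and C :: "real^'n^'p" and dl du :: "real^'p"
    and Jx :: "(real^'n^'n) ivl" and Ju :: "(real^'p^'n) ivl" and Jw :: "(real^'q^'n) ivl"
    and x0 :: "real^'n" and w0 :: "real^'q"
    and ly uy :: "real^'n" and C' :: "real^'n^'p" and dl' du' :: "real^'p"
    and y :: "real^'n" and w :: "real^'q"
  assumes f_deriv: "\<And>z. (f has_derivative blinfun_apply (f' z)) (at z)"
    and f'_cont: "continuous_on UNIV f'"
    and T_inv: "invertible T"
    and bound_N: "local_affine_bound N lz uz C dl du"
    and J_bounds: "\<And>x u w'. x \<in> {lz..uz} \<Longrightarrow>
        u \<in> {mpos C *v lz + mneg C *v uz + dl .. mneg C *v lz + mpos C *v uz + du} \<Longrightarrow>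
        w' \<in> {lw..uw} \<Longrightarrow>
        imem (Dx (f' (x, u, w'))) Jx \<and> imem (Du (f' (x, u, w'))) Ju \<and> imem (Dw (f' (x, u, w'))) Jw"
    and x0_in: "x0 \<in> {lz..uz}"
    and w0_in: "w0 \<in> {lw..uw}"
    and bound_N': "local_affine_bound (\<lambda>y. N (matrix_inv T *v y)) ly uy C' dl' du'"
    and y_box: "{ly..uy} \<subseteq> (\<lambda>x. T *v x) ` {lz..uz}"
    and y_in: "y \<in> {ly..uy}"
    and w_in: "w \<in> {lw..uw}"
  shows "imem (T *v f (matrix_inv T *v y, N (matrix_inv T *v y), w))
    (let u0 = N x0;
         R = iadd (iadd (iadd (ineg (imatvec Jx (pt x0))) (ineg (imatvec Ju (pt u0))))
                         (imatvec Jw (lw - w0, uw - w0)))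
                   (pt (f (x0, u0, w0)))
     in iadd (iadd
           (imatvec (pt T) (imatvec (iadd Jx (imatmul Ju (pt (C' ** T))))
                                    (imatvec (pt (matrix_inv T)) (ly, uy))))
           (imatvec (pt T) (imatvec Ju (dl', du'))))
         (imatvec (pt T) R))"
proof -
  define Ti where "Ti = matrix_inv T"
  have TiT: "Ti ** T = mat 1"
    using T_inv unfolding Ti_def invertible_def matrix_inv_def by (rule someI2_ex) auto
  obtain x where x_in: "x \<in> {lz..uz}" and yx: "y = T *v x" using y_box y_in by blast
  have xi: "Ti *v y = x" using TiT yx by (simp add: matrix_vector_mul_assoc)
  define lu where "lu = mpos C *v lz + mneg C *v uz + dl"
  define uu where "uu = mneg C *v lz + mpos C *v uz + du"
  have Nbox: "N z \<in> {lu..uu}" if "z \<in> {lz..uz}" for z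
  proof -
    have "C *v z + dl \<le> N z" "N z \<le> C *v z + du" using bound_N that unfolding local_affine_bound_def by auto
    moreover have "mpos C *v lz + mneg C *v uz \<le> C *v z" "C *v z \<le> mneg C *v lz + mpos C *v uz"
      using affine_range[OF that, of C] by auto
    ultimately show ?thesis unfolding lu_def uu_def
      by (auto intro: order.trans add_right_mono)
  qed
  define u where "u = N x"
  define u0 where "u0 = N x0"
  have u_in: "u \<in> {lu..uu}" using Nbox[OF x_in] u_def by simp
  have u0_in: "u0 \<in> {lu..uu}" using Nbox[OF x0_in] u0_def by simp
  define p where "p = (x, u, w)"
  define p0 where "p0 = (x0, u0, w0)"
  have "\<forall>i. \<exists>t\<in>{0..1}. f p $ i - f p0 $ i = blinfun_apply (f' (p0 + t *\<^sub>R (p - p0))) (p - p0) $ i"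
    using mvt_comp[OF f_deriv] by blast
  then obtain tt where tt: "\<And>i. tt i \<in> {0..1}"
    "\<And>i. f p $ i - f p0 $ i = blinfun_apply (f' (p0 + tt i *\<^sub>R (p - p0))) (p - p0) $ i"
    by metis
  define xi' where "xi' i = x0 + tt i *\<^sub>R (x - x0)" for i
  define ui' where "ui' i = u0 + tt i *\<^sub>R (u - u0)" for i
  define wi' where "wi' i = w0 + tt i *\<^sub>R (w - w0)" for i
  have seg: "p0 + tt i *\<^sub>R (p - p0) = (xi' i, ui' i, wi' i)" for i
    unfolding p_def p0_def xi'_def ui'_def wi'_def by simp
  have Jin: "imem (Dx (f' (xi' i, ui' i, wi' i))) Jx \<and> imem (Du (f' (xi' i, ui' i, wi' i))) Ju \<and>
      imem (Dw (f' (xi' i, ui' i, wi' i))) Jw" for i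
    using J_bounds[of "xi' i" "ui' i" "wi' i"] tt(1)[of i]
      seg_box[OF x0_in x_in, of "tt i"] seg_box[OF u0_in u_in, of "tt i"] seg_box[OF w0_in w_in, of "tt i"]
    unfolding xi'_def ui'_def wi'_def lu_def uu_def by auto
  define Jxs where "Jxs = (\<chi> i j. Dx (f' (xi' i, ui' i, wi' i)) $ i $ j)"
  define Jus where "Jus = (\<chi> i j. Du (f' (xi' i, ui' i, wi' i)) $ i $ j)"
  define Jws where "Jws = (\<chi> i j. Dw (f' (xi' i, ui' i, wi' i)) $ i $ j)"
  have Jxs_in: "imem Jxs Jx" using Jin unfolding Jxs_def imem_mat by auto
  have Jus_in: "imem Jus Ju" using Jin unfolding Jus_def imem_mat by auto
  have Jws_in: "imem Jws Jw" using Jin unfolding Jws_def imem_mat by auto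
  have fp: "f p = f p0 + Jxs *v (x - x0) + Jus *v (u - u0) + Jws *v (w - w0)"
  proof (subst vec_eq_iff, intro allI)
    fix i
    have "f p $ i = f p0 $ i + (Dx (f' (xi' i, ui' i, wi' i)) *v (x - x0) + Du (f' (xi' i, ui' i, wi' i)) *v (u - u0)
        + Dw (f' (xi' i, ui' i, wi' i)) *v (w - w0)) $ i"
      using tt(2)[of i] unfolding seg decomp[symmetric] by (simp add: p_def p0_def)
    then show "f p $ i = (f p0 + Jxs *v (x - x0) + Jus *v (u - u0) + Jws *v (w - w0)) $ i"
      unfolding Jxs_def Jus_def Jws_def by (simp add: matrix_vector_mult_def)
  qed
  define d where "d = u - C' *v y"
  have d_in: "imem d (dl', du')"
  proof -
    have "C' *v y + dl' \<le> u" "u \<le> C' *v y + du'"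
      using bound_N' y_in xi unfolding local_affine_bound_def u_def Ti_def by auto
    then show ?thesis unfolding imem_def d_def by (auto simp: le_diff_eq diff_le_eq add.commute)
  qed
  define R' where "R' = - (Jxs *v x0) + - (Jus *v u0) + Jws *v (w - w0) + f (x0, u0, w0)"
  have key: "f p = (Jxs + Jus ** (C' ** T)) *v x + Jus *v d + R'"
    unfolding fp R'_def d_def p0_def
    by (simp add: algebra_simps matrix_vector_mul_assoc[symmetric] yx)
  have Tf: "T *v f (Ti *v y, N (Ti *v y), w) = T *v ((Jxs + Jus ** (C' ** T)) *v (Ti *v y)) + T *v (Jus *v d) + T *v R'"
    using key unfolding xi p_def u_def by (simp add: algebra_simps)
  have R_in: "imem R' (iadd (iadd (iadd (ineg (imatvec Jx (pt x0))) (ineg (imatvec Ju (pt u0))))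
                         (imatvec Jw (lw - w0, uw - w0))) (pt (f (x0, u0, w0))))"
    unfolding R'_def
    apply (intro iadd_incl ineg_incl imatvec_incl pt_incl Jxs_in Jus_in Jws_in)
    using w_in by (auto simp: imem_def)
  show ?thesis
    unfolding Let_def Tf[unfolded Ti_def] u0_def[symmetric]
    apply (intro iadd_incl imatvec_incl pt_incl imatmul_incl Jxs_in Jus_in d_in R_in)
    using y_in by (auto simp: imem_def Ti_def)
qed

end
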